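(* Let $G$ be a connected labeled bipartite graph with an odd number of edges whose vertex set is partitioned into two independent sets $A$ and $B$ with $|A|\neq|B|$. Then $X(G;\mathbf{x},q)$ is not palindromic; in particular it is not symmetric.
   Context: A labeled graph is a finite simple graph with vertex set $[n]$. A proper coloring is $c\colon[n]\to\{1,2,\dots\}$ with adjacent vertices colored differently; $\operatorname{asc}(c)=\#\{ij\in E: i<j,\ c(i)<c(j)\}$. The CQF is $X(G;\mathbf{x},q)=\sum_{c \text{ proper}} x_{c(1)}\cdots x_{c(n)}q^{\operatorname{asc}(c)}$. It is symmetric if each coefficient of $q^k$ is a symmetric function, and palindromic if, with $m=|E|$, the coefficient of $q^k$ equals that of $q^{m-k}$ for all $k$. *)

theory Defs
  imports Main "HOL-Library.FuncSet"
begin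

definition labeled_graph :: "nat \<Rightarrow> nat set set \<Rightarrow> bool" where
  "labeled_graph n E \<longleftrightarrow>
     (\<forall>e\<in>E. \<exists>i j. e = {i, j} \<and> i \<noteq> j \<and> i \<in> {1..n} \<and> j \<in> {1..n})"

definition adj :: "nat set set \<Rightarrow> nat \<Rightarrow> nat \<Rightarrow> bool" where
  "adj E u v \<longleftrightarrow> {u, v} \<in> E"

definition connected_graph :: "nat \<Rightarrow> nat set set \<Rightarrow> bool" where
  "connected_graph n E \<longleftrightarrow> (\<forall>u\<in>{1..n}. \<forall>v\<in>{1..n}. (adj E)\<^sup>*\<^sup>* u v)"

definition bipartition :: "nat \<Rightarrow> nat set set \<Rightarrow> nat set \<Rightarrow> nat set \<Rightarrow> bool" where
  "bipartition n E A B \<longleftrightarrow> A \<union> B = {1..n} \<and> A \<inter> B = {} \<and>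
     (\<forall>e\<in>E. \<not> e \<subseteq> A \<and> \<not> e \<subseteq> B)"

definition colorings :: "nat \<Rightarrow> (nat \<Rightarrow> nat) set" where
  "colorings n = {1..n} \<rightarrow>\<^sub>E {1..}"

definition proper :: "nat set set \<Rightarrow> (nat \<Rightarrow> nat) \<Rightarrow> bool" where
  "proper E c \<longleftrightarrow> (\<forall>i j. {i, j} \<in> E \<longrightarrow> c i \<noteq> c j)"

definition asc :: "nat set set \<Rightarrow> (nat \<Rightarrow> nat) \<Rightarrow> nat" where
  "asc E c = card {(i, j). i < j \<and> {i, j} \<in> E \<and> c i < c j}"

text \<open>Exponent vector of the monomial x_{c(1)} ... x_{c(n)}.\<close>
definition monomial_exp :: "nat \<Rightarrow> (nat \<Rightarrow> nat) \<Rightarrow> (nat \<Rightarrow> nat)" where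
  "monomial_exp n c = (\<lambda>a. card {v\<in>{1..n}. c v = a})"

text \<open>Coefficient of x^\<alpha> q^k in X(G;x,q).\<close>
definition cqf_coeff :: "nat \<Rightarrow> nat set set \<Rightarrow> nat \<Rightarrow> (nat \<Rightarrow> nat) \<Rightarrow> nat" where
  "cqf_coeff n E k \<alpha> =
     card {c \<in> colorings n. proper E c \<and> monomial_exp n c = \<alpha> \<and> asc E c = k}"

definition cqf_palindromic :: "nat \<Rightarrow> nat set set \<Rightarrow> bool" where
  "cqf_palindromic n E \<longleftrightarrow>
     (\<forall>k \<le> card E. \<forall>\<alpha>. cqf_coeff n E k \<alpha> = cqf_coeff n E (card E - k) \<alpha>)"

text \<open>Each q^k coefficient is invariant under permutations of the variables x_1, x_2, ...\<close>
definition cqf_symmetric :: "nat \<Rightarrow> nat set set \<Rightarrow> bool" where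
  "cqf_symmetric n E \<longleftrightarrow>
     (\<forall>k \<alpha> \<sigma>. bij \<sigma> \<and> \<sigma> 0 = 0 \<longrightarrow> cqf_coeff n E k (\<alpha> \<circ> \<sigma>) = cqf_coeff n E k \<alpha>)"

end

theory Submission
  imports Defs
begin

theorem proposition5p3:
  fixes n :: nat and E :: "nat set set" and A B :: "nat set"
  assumes "labeled_graph n E"
    and "connected_graph n E"
    and "odd (card E)"
    and "bipartition n E A B"
    and "card A \<noteq> card B"
  shows "\<not> cqf_palindromic n E \<and> \<not> cqf_symmetric n E"
proof -
  note lg = assms(1)[unfolded labeled_graph_def]
  note bp = assms(4)[unfolded bipartition_def]
  have AB: "A \<union> B = {1..n}" "A \<inter> B = {}" "\<And>e. e\<in>E \<Longrightarrow> \<not> e \<subseteq> A \<and> \<not> e \<subseteq> B"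
    using bp by auto
  have edge: "\<And>i j. {i,j} \<in> E \<Longrightarrow> i \<in> {1..n} \<and> j \<in> {1..n} \<and> i \<noteq> j"
  proof -
    fix i j assume "{i,j} \<in> E"
    then obtain a b where "{i,j} = {a,b}" "a\<noteq>b" "a\<in>{1..n}" "b\<in>{1..n}" using lg by blast
    then show "i \<in> {1..n} \<and> j \<in> {1..n} \<and> i \<noteq> j" by (auto simp: doubleton_eq_iff)
  qed
  have edgeAB: "\<And>i j. {i,j} \<in> E \<Longrightarrow> (i \<in> A \<longleftrightarrow> j \<in> B)"
  proof -
    fix i j assume e: "{i,j} \<in> E"
    have "i \<in> A \<union> B" "j \<in> A \<union> B" using edge[OF e] AB(1) by auto
    then show "(i \<in> A \<longleftrightarrow> j \<in> B)" using AB(2) AB(3)[OF e] by auto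
  qed
  define c1 where "c1 = (\<lambda>v. if v \<in> {1..n} then (if v \<in> A then 1 else 2) else (undefined::nat))"
  define c2 where "c2 = (\<lambda>v. if v \<in> {1..n} then (if v \<in> A then 2 else 1) else (undefined::nat))"
  define \<sigma> where "\<sigma> = (\<lambda>a::nat. if a = 1 then 2 else if a = 2 then 1 else a)"
  have c2s: "c2 v = \<sigma> (c1 v)" if "v \<in> {1..n}" for v using that by (simp add: c1_def c2_def \<sigma>_def)
  have bs: "bij \<sigma>"
    by (rule o_bij[of \<sigma>]) (auto simp: \<sigma>_def fun_eq_iff)
  have s0: "\<sigma> 0 = 0" by (simp add: \<sigma>_def)
  have s2: "\<sigma> (\<sigma> a) = a" for a by (simp add: \<sigma>_def)
  define a1 where "a1 = monomial_exp n c1"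
  define a2 where "a2 = monomial_exp n c2"
  have a21: "a2 \<circ> \<sigma> = a1"
  proof
    fix a
    have "{v\<in>{1..n}. c2 v = \<sigma> a} = {v\<in>{1..n}. c1 v = a}"
      using c2s by (auto dest: arg_cong[where f=\<sigma>] simp: s2)
    then show "(a2 \<circ> \<sigma>) a = a1 a" by (simp add: a1_def a2_def monomial_exp_def)
  qed
  have "{v\<in>{1..n}. c1 v = 1} = A" using AB(1) by (auto simp: c1_def)
  moreover have "{v\<in>{1..n}. c2 v = 1} = B" using AB by (auto simp: c2_def)
  ultimately have a12: "a1 \<noteq> a2" using assms(5) unfolding a1_def a2_def monomial_exp_def by metis
  have col1: "c1 \<in> colorings n" "c2 \<in> colorings n"
    by (auto simp: colorings_def c1_def c2_def PiE_def extensional_def)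
  have pr1: "proper E c1" "proper E c2"
    unfolding proper_def using edge edgeAB AB(1,2) by (auto simp: c1_def c2_def)
  have uniq: "c = c1 \<or> c = c2" if cc: "c \<in> colorings n" and pc: "proper E c"
    and ma: "monomial_exp n c = a1 \<or> monomial_exp n c = a2" for c
  proof -
    have ext: "c v = undefined" if "v \<notin> {1..n}" for v
      using cc that by (auto simp: colorings_def PiE_def extensional_def)
    have a1z: "a1 x = 0" "a2 x = 0" if "x \<noteq> 1" "x \<noteq> 2" for x
      using that unfolding a1_def a2_def monomial_exp_def c1_def c2_def
      by (auto intro!: arg_cong[where f=card] simp: card_eq_0_iff)
    have v12: "c v = 1 \<or> c v = 2" if v: "v \<in> {1..n}" for v
    proof (rule ccontr)
      assume "\<not> (c v = 1 \<or> c v = 2)"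
      hence "monomial_exp n c (c v) = 0" using ma a1z by auto
      moreover have "v \<in> {u\<in>{1..n}. c u = c v}" using v by auto
      moreover have "finite {u\<in>{1..n}. c u = c v}" by simp
      ultimately have "card {u\<in>{1..n}. c u = c v} \<noteq> 0" by (simp only: card_eq_0_iff) blast
      with \<open>monomial_exp n c (c v) = 0\<close> show False unfolding monomial_exp_def by simp
    qed
    have c1v: "c1 v = 1 \<or> c1 v = 2" if "v \<in> {1..n}" for v using that by (simp add: c1_def)
    define P where "P v = (c v = c1 v)" for v
    have step: "P u \<longleftrightarrow> P v" if "adj E u v" for u v
    proof -
      have e: "{u,v} \<in> E" using that by (simp add: adj_def)
      have "c u \<noteq> c v" using pc e by (simp add: proper_def)
      moreover have "c1 u \<noteq> c1 v" using pr1(1) e by (simp add: proper_def)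
      moreover have "c u = 1 \<or> c u = 2" "c v = 1 \<or> c v = 2" "c1 u = 1 \<or> c1 u = 2" "c1 v = 1 \<or> c1 v = 2"
        using v12 c1v edge[OF e] by auto
      ultimately show ?thesis unfolding P_def by auto
    qed
    have reach: "(adj E)\<^sup>*\<^sup>* x y \<Longrightarrow> P x \<longleftrightarrow> P y" for x y
      by (induction rule: rtranclp_induct) (use step in auto)
    obtain e where "e \<in> E" using assms(3) by (metis card.empty even_zero ex_in_conv)
    then obtain i j where "e = {i,j}" "i \<in> {1..n}" using lg by blast
    hence one: "1 \<in> {1..n}" by auto
    have all: "P 1 \<longleftrightarrow> P v" if "v \<in> {1..n}" for v
      using reach assms(2) one that unfolding connected_graph_def by blast
    show ?thesis
    proof (cases "P 1")
      case True
      have "c = c1"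
      proof
        fix v show "c v = c1 v"
          using all[of v] True ext[of v] by (cases "v \<in> {1..n}") (auto simp: P_def c1_def)
      qed
      then show ?thesis by simp
    next
      case False
      have "c = c2"
      proof
        fix v show "c v = c2 v"
        proof (cases "v \<in> {1..n}")
          case True
          then have "c v \<noteq> c1 v" using all[of v] False by (auto simp: P_def)
          then show ?thesis using v12[OF True] True by (auto simp: c1_def c2_def)
        next
          case False
          show ?thesis unfolding c2_def if_not_P[OF False] by (rule ext[OF False])
        qed
      qed
      then show ?thesis by simp
    qed
  qed
  define S where "S = {(i, j). i < j \<and> {i, j} \<in> E}"
  have finE: "finite E"
  proof (rule finite_subset)
    show "E \<subseteq> Pow {1..n}" using lg by auto
  qed simp
  have finS: "finite S"
    by (rule finite_subset[of _ "{1..n}\<times>{1..n}"]) (use edge in \<open>auto simp: S_def\<close>)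
  have cardS: "card S = card E"
  proof (rule bij_betw_same_card[of "\<lambda>(i,j). {i,j}"])
    show "bij_betw (\<lambda>(i, j). {i, j}) S E"
      unfolding bij_betw_def
    proof
      show "inj_on (\<lambda>(i, j). {i, j}) S"
        by (auto simp: inj_on_def S_def doubleton_eq_iff)
      show "(\<lambda>(i, j). {i, j}) ` S = E"
      proof
        show "(\<lambda>(i, j). {i, j}) ` S \<subseteq> E" by (auto simp: S_def)
        show "E \<subseteq> (\<lambda>(i, j). {i, j}) ` S"
        proof
          fix e assume e: "e \<in> E"
          then obtain i j where ij: "e = {i,j}" "i \<noteq> j" using lg by blast
          show "e \<in> (\<lambda>(i, j). {i, j}) ` S"
          proof (cases "i < j")
            case True thus ?thesis using e ij by (auto simp: S_def image_iff)
          next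
            case False
            hence "j < i" using ij by auto
            hence "(j,i) \<in> S" using e ij by (simp add: S_def insert_commute)
            moreover have "e = (\<lambda>(i, j). {i, j}) (j,i)" using ij by (simp add: insert_commute)
            ultimately show ?thesis by blast
          qed
        qed
      qed
    qed
  qed
  define k1 where "k1 = asc E c1"
  define k2 where "k2 = asc E c2"
  have asc_eq: "asc E c = card {p \<in> S. c (fst p) < c (snd p)}" for c
    unfolding asc_def S_def by (auto intro!: arg_cong[where f=card])
  have ksum: "k1 + k2 = card E"
  proof -
    define X where "X = {p \<in> S. c1 (fst p) < c1 (snd p)}"
    define Y where "Y = {p \<in> S. c2 (fst p) < c2 (snd p)}"
    have key: "(c1 i < c1 j) \<noteq> (c2 i < c2 j)" if "(i,j) \<in> S" for i j
    proof -
      have e: "{i,j} \<in> E" using that by (simp add: S_def)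
      have i: "i \<in> {1..n}" and j: "j \<in> {1..n}" using edge[OF e] by auto
      have ij: "i \<in> A \<longleftrightarrow> j \<in> B" by (rule edgeAB[OF e])
      show ?thesis
      proof (cases "i \<in> A")
        case True
        hence "j \<notin> A" using ij AB(2) by blast
        thus ?thesis using True i j by (simp add: c1_def c2_def)
      next
        case False
        hence "j \<in> A" using ij AB(1) j by blast
        thus ?thesis using False i j by (simp add: c1_def c2_def)
      qed
    qed
    have SU: "S = X \<union> Y"
      unfolding X_def Y_def using key by fastforce
    have di: "X \<inter> Y = {}"
      unfolding X_def Y_def using key by fastforce
    have fX: "finite X" and fY: "finite Y" using finS by (auto simp: X_def Y_def)
    have "card S = card X + card Y" unfolding SU by (rule card_Un_disjoint[OF fX fY di])
    then show ?thesis unfolding k1_def k2_def asc_eq cardS[symmetric] X_def Y_def by simp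
  qed
  have kne: "k1 \<noteq> k2"
  proof
    assume "k1 = k2"
    hence "card E = 2 * k2" using ksum by simp
    thus False using assms(3) by simp
  qed
  have setU: "{c \<in> colorings n. proper E c \<and> monomial_exp n c = a \<and> asc E c = k}
      = (if monomial_exp n c1 = a \<and> asc E c1 = k then {c1} else {})
      \<union> (if monomial_exp n c2 = a \<and> asc E c2 = k then {c2} else {})"
    if "a = a1 \<or> a = a2" for a k
  proof (rule set_eqI, rule iffI)
    fix c assume c: "c \<in> {c \<in> colorings n. proper E c \<and> monomial_exp n c = a \<and> asc E c = k}"
    hence "c = c1 \<or> c = c2" using uniq[of c] that by blast
    thus "c \<in> (if monomial_exp n c1 = a \<and> asc E c1 = k then {c1} else {})
      \<union> (if monomial_exp n c2 = a \<and> asc E c2 = k then {c2} else {})" using c by auto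
  next
    fix c assume "c \<in> (if monomial_exp n c1 = a \<and> asc E c1 = k then {c1} else {})
      \<union> (if monomial_exp n c2 = a \<and> asc E c2 = k then {c2} else {})"
    thus "c \<in> {c \<in> colorings n. proper E c \<and> monomial_exp n c = a \<and> asc E c = k}"
      using col1 pr1 by (auto split: if_splits)
  qed
  have m1: "monomial_exp n c1 = a1" "monomial_exp n c2 = a2" by (simp_all add: a1_def a2_def)
  have C11: "cqf_coeff n E k1 a1 = 1"
    unfolding cqf_coeff_def setU[OF disjI1[OF refl]] unfolding m1 k1_def[symmetric] k2_def[symmetric] using a12 kne by simp
  have C21: "cqf_coeff n E k2 a1 = 0"
    unfolding cqf_coeff_def setU[OF disjI1[OF refl]] unfolding m1 k1_def[symmetric] k2_def[symmetric] using a12 kne by simp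
  have C12: "cqf_coeff n E k1 a2 = 0"
    unfolding cqf_coeff_def setU[OF disjI2[OF refl]] unfolding m1 k1_def[symmetric] k2_def[symmetric] using a12 kne by simp
  have "\<not> cqf_palindromic n E"
  proof
    assume p: "cqf_palindromic n E"
    have le: "k1 \<le> card E" using ksum by simp
    have "cqf_coeff n E k1 a1 = cqf_coeff n E (card E - k1) a1"
      using p le unfolding cqf_palindromic_def by blast
    moreover have "card E - k1 = k2" using ksum by simp
    ultimately show False using C11 C21 by simp
  qed
  moreover have "\<not> cqf_symmetric n E"
  proof
    assume "cqf_symmetric n E"
    hence "cqf_coeff n E k1 (a2 \<circ> \<sigma>) = cqf_coeff n E k1 a2"
      using bs s0 unfolding cqf_symmetric_def by simp
    thus False using C11 C12 a21 by simp
  qed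
  ultimately show ?thesis by simp
qed

end
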